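(* Let $1\le i\le N$ and $w_1,w_2\in\mathcal A_i$ with $w_1\ne w_2$, and let $w_1^{-1}w_2=\prod_{\ell=1}^dA_{i_\ell,j_\ell}^{(k_\ell)}$, $d\ge1$, be the reduced representation of $w_1^{-1}w_2$. Then, as power series in $\lambda$ (in particular for all $|\lambda|\le1$), $$\mathcal R(w_1,w_2;\lambda)=\prod_{\ell=1}^dR_{i_\ell,j_\ell}^{(k_\ell)}(\lambda).$$
   Context: Fix an integer $N\ge 3$. Let $\mathcal G_N$ be the groupoid with object set $\{1,\dots,N\}$ generated by arrows $A_{i,j}^{(k)}$, $i\neq j\in\{1,\dots,N\}$, $k\in\{-1,1\}$, with source $i$ and target $j$, subject to the relations $A_{i,j}^{(k)}A_{j,\ell}^{(k)}=A_{i,\ell}^{(k)}$ for all $i,j,\ell$, $k$, with the convention $A_{i,i}^{(k)}:=e_i$ (unit at object $i$). Let $\mathcal A$ be its arrow set and $\mathcal A_i$ the set of arrows with source $i$. Every arrow has a unique reduced representation: either empty or $A_{i_1,i_2}^{(k)}A_{i_2,i_3}^{(-k)}\cdots A_{i_d,i_{d+1}}^{((-1)^{d+1}k)}$ with $d\ge1$, $i_\ell\ne i_{\ell+1}$. Let $\{W_n\}_{n\ge0}$ be the Markov chain on $\mathcal A$ with $P(W_{n+1}=y\mid W_n=x)=p_{i,j}^{(k)}$ if $x^{-1}y=A_{i,j}^{(k)}$ with $i\ne j$ and $0$ otherwise, where $p_{i,j}^{(k)}\in(0,1)$ and $\sum_{j\ne i}\sum_{k=\pm1}p_{i,j}^{(k)}=1$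 for each $i$; $P_x,E_x$ denote law and expectation with $W_0=x$. For $y\in\mathcal A$ let $\tau_y=\inf\{n\ge0:W_n=y\}$ and $\mathcal R(x,y;\lambda)=\sum_{n\ge0}P_x(\tau_y=n)\lambda^n$. For $x\in\mathcal A$ let $T(0,x)=\inf\{n\ge0:W_n=W_0x\}$ (possibly $\infty$) and $R_{i,j}^{(k)}(\lambda)=E_{e_i}[\lambda^{T(0,A_{i,j}^{(k)})}]$. *)

theory Defs
  imports "HOL-Analysis.Analysis" "HOL-Computational_Algebra.Formal_Power_Series"
begin

text \<open>Letters (a,b,k) stand for the generator A_{a,b}^{(k)}.  An arrow is encoded by its
source together with its reduced word: (s, []) is the unit e_s.\<close>

type_synonym letter = "nat \<times> nat \<times> int"
type_synonym arrow = "nat \<times> letter list"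

definition src :: "arrow \<Rightarrow> nat" where
  "src x = fst x"

definition tgt :: "arrow \<Rightarrow> nat" where
  "tgt x = (if snd x = [] then fst x else fst (snd (last (snd x))))"

definition reduced_word :: "nat \<Rightarrow> nat \<Rightarrow> letter list \<Rightarrow> bool" where
  "reduced_word N i ls \<longleftrightarrow>
     (\<forall>l < length ls. fst (ls!l) \<in> {1..N} \<and> fst (snd (ls!l)) \<in> {1..N}
        \<and> fst (ls!l) \<noteq> fst (snd (ls!l)) \<and> snd (snd (ls!l)) \<in> {-1, 1})
   \<and> (ls \<noteq> [] \<longrightarrow> fst (ls!0) = i)
   \<and> (\<forall>l. Suc l < length ls \<longrightarrow> fst (snd (ls!l)) = fst (ls!Suc l)
        \<and> snd (snd (ls!Suc l)) = - snd (snd (ls!l)))"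

definition arrows_from :: "nat \<Rightarrow> nat \<Rightarrow> arrow set" where
  "arrows_from N i = {(i, ls) | ls. reduced_word N i ls}"

text \<open>Right multiplication of an arrow x by a generator A_{a,b}^{(k)} with a = tgt x,
  using the relations A_{c,a}^{(k)} A_{a,b}^{(k)} = A_{c,b}^{(k)}, A_{c,c}^{(k)} = e_c.\<close>
definition app_letter :: "arrow \<Rightarrow> letter \<Rightarrow> arrow" where
  "app_letter x l =
     (let s = fst x; ls = snd x; a = fst l; b = fst (snd l); k = snd (snd l) in
      if ls \<noteq> [] \<and> snd (snd (last ls)) = k then
        (let c = fst (last ls) in
          if c = b then (s, butlast ls) else (s, butlast ls @ [(c, b, k)]))
      else (s, ls @ [(a, b, k)]))"

definition gmult :: "arrow \<Rightarrow> arrow \<Rightarrow> arrow" where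
  "gmult x y = foldl app_letter x (snd y)"

definition ginv :: "arrow \<Rightarrow> arrow" where
  "ginv x = (tgt x, rev (map (\<lambda>(a, b, k). (b, a, k)) (snd x)))"

text \<open>Markov chain: a move (j,k) from x goes to x A_{tgt x, j}^{(k)} with probability
  p (tgt x) j k (zero if j = tgt x, which is not an allowed move).\<close>
definition move :: "arrow \<Rightarrow> nat \<times> int \<Rightarrow> arrow" where
  "move x m = app_letter x (tgt x, fst m, snd m)"

fun walk :: "arrow \<Rightarrow> (nat \<times> int) list \<Rightarrow> arrow list" where
  "walk x [] = [x]"
| "walk x (m # ms) = x # walk (move x m) ms"

fun pathprob :: "(nat \<Rightarrow> nat \<Rightarrow> int \<Rightarrow> real) \<Rightarrow> arrow \<Rightarrow> (nat \<times> int) list \<Rightarrow> real" where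
  "pathprob p x [] = 1"
| "pathprob p x (m # ms) =
     (if fst m \<noteq> tgt x then p (tgt x) (fst m) (snd m) else 0) * pathprob p (move x m) ms"

text \<open>P_x(tau_y = n): sum of the probabilities of the length-n paths from x that
  first visit y at time n.\<close>
definition hitprob :: "nat \<Rightarrow> (nat \<Rightarrow> nat \<Rightarrow> int \<Rightarrow> real) \<Rightarrow> arrow \<Rightarrow> arrow \<Rightarrow> nat \<Rightarrow> real" where
  "hitprob N p x y n =
     (\<Sum>ms \<in> {ms. length ms = n \<and> set ms \<subseteq> {1..N} \<times> {-1, 1}}.
        (if (\<forall>m < n. walk x ms ! m \<noteq> y) \<and> walk x ms ! n = y then pathprob p x ms else 0))"

definition RR_fps :: "nat \<Rightarrow> (nat \<Rightarrow> nat \<Rightarrow> int \<Rightarrow> real) \<Rightarrow> arrow \<Rightarrow> arrow \<Rightarrow> real fps" where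
  "RR_fps N p x y = Abs_fps (hitprob N p x y)"

definition RR :: "nat \<Rightarrow> (nat \<Rightarrow> nat \<Rightarrow> int \<Rightarrow> real) \<Rightarrow> arrow \<Rightarrow> arrow \<Rightarrow> complex \<Rightarrow> complex" where
  "RR N p x y z = (\<Sum>n. complex_of_real (hitprob N p x y n) * z ^ n)"

text \<open>R_{i,j}^{(k)}: generating function of T(0, A_{i,j}^{(k)}) started at e_i, i.e. of the
  first hitting time of e_i A_{i,j}^{(k)} = A_{i,j}^{(k)} (lambda^infinity counted as 0).\<close>
definition Rgen_fps :: "nat \<Rightarrow> (nat \<Rightarrow> nat \<Rightarrow> int \<Rightarrow> real) \<Rightarrow> nat \<Rightarrow> nat \<Rightarrow> int \<Rightarrow> real fps" where
  "Rgen_fps N p i j k = RR_fps N p (i, []) (gmult (i, []) (i, [(i, j, k)]))"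

definition Rgen :: "nat \<Rightarrow> (nat \<Rightarrow> nat \<Rightarrow> int \<Rightarrow> real) \<Rightarrow> nat \<Rightarrow> nat \<Rightarrow> int \<Rightarrow> complex \<Rightarrow> complex" where
  "Rgen N p i j k z = RR N p (i, []) (gmult (i, []) (i, [(i, j, k)])) z"

definition valid_probs :: "nat \<Rightarrow> (nat \<Rightarrow> nat \<Rightarrow> int \<Rightarrow> real) \<Rightarrow> bool" where
  "valid_probs N p \<longleftrightarrow>
     (\<forall>i \<in> {1..N}. \<forall>j \<in> {1..N}. \<forall>k \<in> {-1, 1}. j \<noteq> i \<longrightarrow> 0 < p i j k \<and> p i j k < 1)
   \<and> (\<forall>i \<in> {1..N}. (\<Sum>j \<in> {1..N} - {i}. \<Sum>k \<in> {-1, 1}. p i j k) = 1)"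

end

theory Submission
  imports Defs
begin


fun chain :: "nat \<Rightarrow> letter list \<Rightarrow> bool" where
  "chain s [] = True"
| "chain s (l # R) = (fst l = s \<and> fst l \<noteq> fst (snd l)
      \<and> (R \<noteq> [] \<longrightarrow> snd (snd (hd R)) \<noteq> snd (snd l)) \<and> chain (fst (snd l)) R)"

definition wf :: "arrow \<Rightarrow> bool" where "wf x = chain (fst x) (snd x)"

lemma tgt_Nil[simp]: "tgt (s, []) = s" by (simp add: tgt_def)
lemma tgt_snoc[simp]: "tgt (s, ys @ [(c, a, k)]) = a" by (simp add: tgt_def)
lemma tgt_snoc2[simp]: "tgt (s, ys @ [l]) = fst (snd l)" by (simp add: tgt_def)
lemma tgt_single[simp]: "tgt (s, [l]) = fst (snd l)" by (simp add: tgt_def)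
lemma tgt_Cons[simp]: "tgt (s, l # xs) = tgt (fst (snd l), xs)" by (simp add: tgt_def)
lemma tgt_app_Cons[simp]: "tgt (s, xs @ l # ys) = tgt (fst (snd l), ys)" by (simp add: tgt_def)

lemma chain_append:
  "chain s (xs @ ys) \<longleftrightarrow> chain s xs \<and> chain (tgt (s, xs)) ys
     \<and> (xs \<noteq> [] \<longrightarrow> ys \<noteq> [] \<longrightarrow> snd (snd (hd ys)) \<noteq> snd (snd (last xs)))"
proof (induction xs arbitrary: s)
  case Nil then show ?case by simp
next
  case (Cons l xs) then show ?case by (cases xs) (auto simp: tgt_Cons)
qed

lemma chain_snoc:
  "chain s (ys @ [(c, a, k)]) \<longleftrightarrow> chain s ys \<and> c = tgt (s, ys) \<and> c \<noteq> a
     \<and> (ys \<noteq> [] \<longrightarrow> k \<noteq> snd (snd (last ys)))"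
  by (simp add: chain_append)

lemma app_Nil[simp]: "app_letter (s, []) (a, b, k) = (s, [(a, b, k)])"
  by (simp add: app_letter_def)
lemma app_snoc[simp]: "app_letter (s, ys @ [(c, a, k')]) (a', b, k) =
  (if k' = k then (if c = b then (s, ys) else (s, ys @ [(c, b, k)]))
   else (s, ys @ [(c, a, k'), (a', b, k)]))"
  by (simp add: app_letter_def Let_def)

lemma app_single[simp]: "app_letter (s, [(c, a, k')]) (a', b, k) =
  (if k' = k then (if c = b then (s, []) else (s, [(c, b, k)]))
   else (s, [(c, a, k'), (a', b, k)]))"
  using app_snoc[of s "[]"] by simp

lemma butlast_two[simp]: "butlast (xs @ [p, q]) = xs @ [p]"
  by (simp add: butlast_append)

lemma src_app[simp]: "fst (app_letter x l) = fst x"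
  by (simp add: app_letter_def Let_def)

lemma app_wf:
  assumes "chain s xs" "a = tgt (s, xs)" "a \<noteq> b"
  shows "chain s (snd (app_letter (s, xs) (a, b, k))) \<and> tgt (app_letter (s, xs) (a, b, k)) = b"
proof (cases xs rule: rev_exhaust)
  case Nil then show ?thesis using assms by simp
next
  case (snoc ys l)
  obtain c a0 k0 where l: "l = (c, a0, k0)" by (cases l) auto
  show ?thesis using assms unfolding snoc l
    by (cases "ys = []") (auto simp: chain_snoc chain_append simp del: append_assoc simp add: append_assoc[symmetric])
qed

lemma app_append_case:
  "xs = [] \<or> snd (snd (last xs)) \<noteq> k \<Longrightarrow> app_letter (s, xs) (a, b, k) = (s, xs @ [(a, b, k)])"
  by (auto simp: app_letter_def Let_def)

lemma foldl_chain: "chain s (xs @ ys) \<Longrightarrow> foldl app_letter (s, xs) ys = (s, xs @ ys)"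
proof (induction ys arbitrary: xs)
  case Nil then show ?case by simp
next
  case (Cons y ys)
  obtain a b k where y: "y = (a, b, k)" by (cases y) auto
  have "xs = [] \<or> snd (snd (last xs)) \<noteq> k"
    using Cons.prems unfolding y by (auto simp: chain_append)
  then have "app_letter (s, xs) y = (s, xs @ [y])" using app_append_case y by simp
  then show ?case using Cons.IH[of "xs @ [y]"] Cons.prems by simp
qed

lemma foldl_wf:
  assumes "chain (fst g) (snd g)" "chain (tgt g) ys"
  shows "chain (fst g) (snd (foldl app_letter g ys)) \<and> tgt (foldl app_letter g ys) = tgt (tgt g, ys)
     \<and> fst (foldl app_letter g ys) = fst g"
  using assms(2)
proof (induction ys rule: rev_induct)
  case Nil then show ?case using assms(1) by simp
next
  case (snoc l ys)
  obtain a b k where l: "l = (a, b, k)" by (cases l) auto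
  have c: "chain (tgt g) ys" "a = tgt (tgt g, ys)" "a \<noteq> b"
    using snoc.prems unfolding l by (auto simp: chain_snoc)
  define h where "h = foldl app_letter g ys"
  have h: "chain (fst h) (snd h)" "tgt h = a" "fst h = fst g"
    using snoc.IH[OF c(1)] c unfolding h_def by auto
  have "chain (fst h) (snd (app_letter h (a,b,k))) \<and> tgt (app_letter h (a,b,k)) = b"
    using app_wf[of "fst h" "snd h" a b k] h(1,2) c(3) by simp
  then show ?case using h(3) unfolding l h_def by simp
qed

lemma merge_lemma:
  assumes "chain s hs" "c = tgt (s, hs)" "c \<noteq> a" "a \<noteq> b"
  shows "(if c = b then (s, hs) else app_letter (s, hs) (c, b, k)) = app_letter (app_letter (s, hs) (c, a, k)) (a, b, k)"
proof (cases hs rule: rev_exhaust)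
  case Nil then show ?thesis using assms by (simp add: app_letter_def)
next
  case (snoc zs l)
  obtain e x k1 where l: "l = (e, x, k1)" by (cases l) auto
  have z: "zs = [] \<or> snd (snd (last zs)) \<noteq> k1" "x = c" "e \<noteq> x"
    using assms unfolding snoc l by (auto simp: chain_snoc)
  show ?thesis
  proof (cases "k1 = k")
    case True
    then show ?thesis using z assms unfolding snoc l
      by (auto simp: app_append_case simp del: append_assoc simp add: append_assoc[symmetric])
  next
    case False
    then show ?thesis using z assms unfolding snoc l
      by (auto simp add: app_letter_def Let_def)
  qed
qed

lemma gmult_wf:
  assumes "wf g" "wf u" "fst u = tgt g"
  shows "wf (gmult g u) \<and> tgt (gmult g u) = tgt u \<and> fst (gmult g u) = fst g"
proof -
  have "tgt (tgt g, snd u) = tgt u" using assms(3) by (metis prod.collapse)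
  then show ?thesis using foldl_wf[of g "snd u"] assms unfolding wf_def gmult_def by (metis)
qed

lemma gmult_unit: "wf u \<Longrightarrow> gmult (fst u, []) u = u"
  using foldl_chain[of "fst u" "[]" "snd u"] by (simp add: wf_def gmult_def)

lemma gmult_app:
  assumes "wf g" "wf u" "fst u = tgt g" "a = tgt u" "a \<noteq> b"
  shows "gmult g (app_letter u (a, b, k)) = app_letter (gmult g u) (a, b, k)"
proof -
  obtain s xs where u: "u = (s, xs)" by (cases u) auto
  show ?thesis
  proof (cases xs rule: rev_exhaust)
    case Nil then show ?thesis using u by (simp add: gmult_def)
  next
    case (snoc ys l)
    obtain c a0 k0 where l: "l = (c, a0, k0)" by (cases l) auto
    have cs: "chain s ys" "c = tgt (s, ys)" "c \<noteq> a0" "a = a0"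
      using assms(2,4) unfolding u snoc l wf_def by (auto simp: chain_snoc)
    show ?thesis
    proof (cases "k0 = k")
      case False
      then show ?thesis unfolding u snoc l using cs by (simp add: gmult_def)
    next
      case True
      define h where "h = foldl app_letter g ys"
      have "s = tgt g" using assms(3) u by simp
      then have h: "chain (fst h) (snd h)" "tgt h = c"
        using foldl_wf[of g ys] assms(1) cs unfolding h_def wf_def by auto
      have M: "(if c = b then h else app_letter h (c, b, k))
          = app_letter (app_letter h (c, a, k)) (a, b, k)"
        using merge_lemma[of "fst h" "snd h" c a b k, OF h(1) _ _ assms(5)] h(2) cs(3,4)
        unfolding prod.collapse by simp
      have L: "gmult g (app_letter u (a, b, k)) = (if c = b then h else app_letter h (c, b, k))"
        unfolding u snoc l using cs(4) True by (simp add: gmult_def h_def)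
      have R: "app_letter (gmult g u) (a, b, k) = app_letter (app_letter h (c, a, k)) (a, b, k)"
        unfolding u snoc l using cs(4) True by (simp add: gmult_def h_def)
      show ?thesis using L M R by simp
    qed
  qed
qed

lemma gmult_assoc:
  assumes "wf g" "wf u" "wf v" "fst u = tgt g" "fst v = tgt u"
  shows "gmult g (gmult u v) = gmult (gmult g u) v"
proof -
  obtain s ys where v: "v = (s, ys)" by (cases v) auto
  have "chain s ys" "s = tgt u" using assms(3,5) v by (auto simp: wf_def)
  then show ?thesis unfolding v
  proof (induction ys rule: rev_induct)
    case Nil then show ?case by (simp add: gmult_def)
  next
    case (snoc l ys)
    obtain a b k where l: "l = (a, b, k)" by (cases l) auto
    have c: "chain s ys" "a = tgt (s, ys)" "a \<noteq> b"
      using snoc.prems unfolding l by (auto simp: chain_snoc)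
    define m where "m = gmult u (s, ys)"
    have m: "wf m" "tgt m = a" "fst m = tgt g"
      using gmult_wf[of u "(s, ys)"] assms(2,4) c snoc.prems unfolding m_def wf_def by auto
    have e1: "gmult u (s, ys @ [l]) = app_letter m l" unfolding m_def by (simp add: gmult_def)
    have e2: "gmult (gmult g u) (s, ys @ [l]) = app_letter (gmult (gmult g u) (s, ys)) l"
      by (simp add: gmult_def)
    have "gmult g (app_letter m l) = app_letter (gmult g m) l"
      unfolding l by (rule gmult_app) (use m assms c in auto)
    then show ?case using e1 e2 snoc.IH[OF c(1) snoc.prems(2)] m_def by simp
  qed
qed

definition sw :: "letter \<Rightarrow> letter" where "sw = (\<lambda>(a, b, k). (b, a, k))"

lemma ginv_sw: "ginv x = (tgt x, rev (map sw (snd x)))"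
  by (simp add: ginv_def sw_def)

lemma sw_simp[simp]: "sw (a, b, k) = (b, a, k)" by (simp add: sw_def)
lemma sw_sw[simp]: "sw (sw l) = l" by (cases l) simp
lemma sw_sign[simp]: "snd (snd (sw l)) = snd (snd l)" by (cases l) simp

lemma chain_rev:
  "chain s xs \<Longrightarrow> chain (tgt (s, xs)) (rev (map sw xs)) \<and> tgt (tgt (s, xs), rev (map sw xs)) = s"
proof (induction xs rule: rev_induct)
  case Nil then show ?case by simp
next
  case (snoc l xs)
  obtain a b k where l: "l = (a, b, k)" by (cases l) auto
  have c: "chain s xs" "a = tgt (s, xs)" "a \<noteq> b" "xs \<noteq> [] \<longrightarrow> k \<noteq> snd (snd (last xs))"
    using snoc.prems unfolding l by (auto simp: chain_snoc)
  show ?case using snoc.IH[OF c(1)] c unfolding l by (auto simp: hd_rev last_map)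
qed

lemma foldl_ginv: "chain s xs \<Longrightarrow> foldl app_letter (s, xs) (rev (map sw xs)) = (s, [])"
proof (induction xs rule: rev_induct)
  case Nil then show ?case by simp
next
  case (snoc l xs)
  obtain a b k where l: "l = (a, b, k)" by (cases l) auto
  have c: "chain s xs" using snoc.prems unfolding l by (auto simp: chain_snoc)
  show ?case using snoc.IH[OF c] unfolding l by simp
qed

lemma ginv_wf: "wf x \<Longrightarrow> wf (ginv x) \<and> tgt (ginv x) = fst x \<and> fst (ginv x) = tgt x"
  using chain_rev[of "fst x" "snd x"] by (simp add: wf_def ginv_sw)

lemma gmult_ginv: "wf x \<Longrightarrow> gmult x (ginv x) = (fst x, [])"
  using foldl_ginv[of "fst x" "snd x"] by (simp add: wf_def ginv_sw gmult_def)

lemma ginv_ginv: "wf x \<Longrightarrow> ginv (ginv x) = x"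
proof -
  assume "wf x"
  then have "tgt (ginv x) = fst x" using ginv_wf by blast
  then show ?thesis by (simp add: ginv_sw rev_map comp_def)
qed

lemma ginv_gmult: "wf x \<Longrightarrow> gmult (ginv x) x = (tgt x, [])"
  using gmult_ginv[of "ginv x"] ginv_wf[of x] ginv_ginv[of x] by simp

lemma gmult_cancel:
  assumes "wf g" "wf a" "wf b" "fst a = tgt g" "fst b = tgt g" "gmult g a = gmult g b"
  shows "a = b"
proof -
  have "\<And>c. wf c \<Longrightarrow> fst c = tgt g \<Longrightarrow> gmult (ginv g) (gmult g c) = c"
  proof -
    fix c assume c: "wf c" "fst c = tgt g"
    have "gmult (ginv g) (gmult g c) = gmult (gmult (ginv g) g) c"
      by (rule gmult_assoc) (use ginv_wf[OF assms(1)] assms(1) c in auto)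
    also have "\<dots> = c" using ginv_gmult[OF assms(1)] gmult_unit[OF c(1)] c(2) by simp
    finally show "gmult (ginv g) (gmult g c) = c" .
  qed
  then show ?thesis using assms by metis
qed




definition MM :: "nat \<Rightarrow> (nat \<times> int) set" where "MM N = {1..N} \<times> {-1, 1}"
definition q :: "(nat \<Rightarrow> nat \<Rightarrow> int \<Rightarrow> real) \<Rightarrow> arrow \<Rightarrow> nat \<times> int \<Rightarrow> real" where
  "q p x m = (if fst m \<noteq> tgt x then p (tgt x) (fst m) (snd m) else 0)"

lemma finite_MM[simp]: "finite (MM N)" by (simp add: MM_def)

lemma hit0: "hitprob N p x y 0 = (if x = y then 1 else 0)"
proof -
  have e: "{ms. length ms = 0 \<and> set ms \<subseteq> {1..N} \<times> {-1::int, 1}} = {[]}" by auto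
  show ?thesis unfolding hitprob_def e by simp
qed

lemma hitSuc: "hitprob N p x y (Suc n) =
   (if x = y then 0 else (\<Sum>m\<in>MM N. q p x m * hitprob N p (move x m) y n))"
proof -
  define L where "L n = {ms. length ms = n \<and> set ms \<subseteq> {1..N} \<times> {-1::int, 1}}" for n
  define G where "G z ms = (if (\<forall>k < n. walk z ms ! k \<noteq> y) \<and> walk z ms ! n = y then pathprob p z ms else 0)" for z ms
  have fin: "finite (L n)" unfolding L_def using finite_lists_length_eq[of "{1..N} \<times> {-1::int, 1}" n]
    by (simp add: conj_commute)
  have LS: "L (Suc n) = (\<lambda>(m, ms). m # ms) ` (MM N \<times> L n)"
    unfolding L_def MM_def by (auto simp: length_Suc_conv image_def)
  have inj: "inj_on (\<lambda>(m, ms). m # ms) (MM N \<times> L n)" by (auto simp: inj_on_def)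
  define H where "H ms = (if (\<forall>k < Suc n. walk x ms ! k \<noteq> y) \<and> walk x ms ! Suc n = y
            then pathprob p x ms else 0)" for ms
  have F: "H (m # ms) = (if x = y then 0 else q p x m * G (move x m) ms)" for m ms
  proof -
    have "(\<forall>k < Suc n. walk x (m # ms) ! k \<noteq> y) \<longleftrightarrow> x \<noteq> y \<and> (\<forall>k < n. walk (move x m) ms ! k \<noteq> y)"
      by (auto simp: less_Suc_eq_0_disj)
    then show ?thesis by (auto simp: G_def q_def H_def)
  qed
  have "hitprob N p x y (Suc n) = (\<Sum>ms\<in>L (Suc n). H ms)" by (simp add: hitprob_def L_def H_def)
  also have "\<dots> = (\<Sum>(m, ms)\<in>MM N \<times> L n. H (m # ms))"
    unfolding LS sum.reindex[OF inj] by (simp add: case_prod_beta comp_def)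
  also have "\<dots> = (\<Sum>(m, ms)\<in>MM N \<times> L n. (if x = y then 0 else q p x m * G (move x m) ms))"
    by (rule sum.cong) (auto simp: F)
  also have "\<dots> = (\<Sum>m\<in>MM N. \<Sum>ms\<in>L n. (if x = y then 0 else q p x m * G (move x m) ms))"
    by (rule sum.cartesian_product[symmetric])
  also have "\<dots> = (if x = y then 0 else (\<Sum>m\<in>MM N. q p x m * hitprob N p (move x m) y n))"
    by (simp add: hitprob_def L_def G_def sum_distrib_left)
  finally show ?thesis .
qed

lemma hit_zz: "hitprob N p z z a = (if a = 0 then 1 else 0)"
  by (cases a) (simp_all add: hit0 hitSuc)

lemma move_wf: "wf u \<Longrightarrow> fst m \<noteq> tgt u \<Longrightarrow> wf (move u m) \<and> fst (move u m) = fst u \<and> tgt (move u m) = fst m"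
  using app_wf[of "fst u" "snd u" "tgt u" "fst m" "snd m"] by (simp add: wf_def move_def)

lemma hit_transl:
  assumes "wf g" "wf u" "wf v" "fst u = tgt g" "fst v = tgt g"
  shows "hitprob N p (gmult g u) (gmult g v) n = hitprob N p u v n"
  using assms(2,4)
proof (induction n arbitrary: u)
  case 0
  have "gmult g u = gmult g v \<longleftrightarrow> u = v" using gmult_cancel[of g u v] 0 assms by auto
  then show ?case by (simp add: hit0)
next
  case (Suc n)
  have eq: "gmult g u = gmult g v \<longleftrightarrow> u = v" using gmult_cancel[of g u v] Suc.prems assms by auto
  have tg: "tgt (gmult g u) = tgt u" using gmult_wf[of g u] Suc.prems assms by auto
  have "q p (gmult g u) m * hitprob N p (move (gmult g u) m) (gmult g v) n = q p u m * hitprob N p (move u m) v n" for m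
  proof (cases "fst m = tgt u")
    case True then show ?thesis by (simp add: q_def tg)
  next
    case False
    have "move (gmult g u) m = gmult g (move u m)"
      unfolding move_def tg using gmult_app[of g u "tgt u" "fst m" "snd m"] Suc.prems assms False by auto
    moreover have "hitprob N p (gmult g (move u m)) (gmult g v) n = hitprob N p (move u m) v n"
      using Suc.IH[of "move u m"] move_wf[of u m] Suc.prems False by auto
    ultimately show ?thesis by (simp add: q_def tg)
  qed
  then show ?case by (simp add: hitSuc eq)
qed

lemma delta_conv: "(\<Sum>a\<le>(n::nat). (if a = 0 then 1 else 0) * f (n - a)) = (f n :: real)"
proof (cases n)
  case 0 then show ?thesis by simp
next
  case (Suc m)
  show ?thesis unfolding Suc by (subst sum.atMost_Suc_shift) simp
qed

lemma hit_cut: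
  assumes "x \<in> U" "y \<notin> U" "\<And>x m. x \<in> U \<Longrightarrow> x \<noteq> z \<Longrightarrow> move x m \<in> U"
  shows "hitprob N p x y n = (\<Sum>a\<le>n. hitprob N p x z a * hitprob N p z y (n - a))"
  using assms(1)
proof (induction n arbitrary: x)
  case 0
  have "x \<noteq> y" using 0 assms(2) by auto
  then show ?case by (simp add: hit0)
next
  case (Suc n)
  show ?case
  proof (cases "x = z")
    case True
    then show ?thesis by (simp add: hit_zz delta_conv)
  next
    case False
    have "x \<noteq> y" using Suc.prems assms(2) by auto
    have "hitprob N p x y (Suc n) = (\<Sum>m\<in>MM N. q p x m * (\<Sum>a\<le>n. hitprob N p (move x m) z a * hitprob N p z y (n - a)))"
      using Suc.IH[OF assms(3)[OF Suc.prems False]] \<open>x \<noteq> y\<close> by (simp add: hitSuc)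
    also have "\<dots> = (\<Sum>a\<le>n. (\<Sum>m\<in>MM N. q p x m * hitprob N p (move x m) z a) * hitprob N p z y (n - a))"
      by (simp add: sum_distrib_left sum_distrib_right mult.assoc sum.swap[of _ "MM N"])
    also have "\<dots> = (\<Sum>a\<le>n. hitprob N p x z (Suc a) * hitprob N p z y (n - a))"
      using False by (simp add: hitSuc)
    also have "\<dots> = (\<Sum>a\<le>n. hitprob N p x z (Suc a) * hitprob N p z y (Suc n - Suc a))"
      by simp
    also have "\<dots> = hitprob N p x z 0 * hitprob N p z y (Suc n - 0) + \<dots>"
      using False by (simp add: hit0)
    also have "\<dots> = (\<Sum>a\<le>Suc n. hitprob N p x z a * hitprob N p z y (Suc n - a))"
      by (rule sum.atMost_Suc_shift[symmetric])
    finally show ?thesis .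
  qed
qed

lemma RR_fps_cut:
  assumes "x \<in> U" "y \<notin> U" "\<And>x m. x \<in> U \<Longrightarrow> x \<noteq> z \<Longrightarrow> move x m \<in> U"
  shows "RR_fps N p x y = RR_fps N p x z * RR_fps N p z y"
  by (rule fps_ext) (simp add: RR_fps_def fps_mult_nth atLeast0AtMost hit_cut[OF assms])

lemma RR_fps_transl:
  assumes "wf g" "wf u" "wf v" "fst u = tgt g" "fst v = tgt g"
  shows "RR_fps N p (gmult g u) (gmult g v) = RR_fps N p u v"
proof -
  have "hitprob N p (gmult g u) (gmult g v) = hitprob N p u v" by (rule ext) (rule hit_transl[OF assms])
  then show ?thesis by (simp add: RR_fps_def)
qed




lemma app_U:
  assumes "\<not> (2 \<le> length xs \<and> hd xs = l)" "xs \<noteq> [l]"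
  shows "\<not> (2 \<le> length (snd (app_letter (s, xs) l')) \<and> hd (snd (app_letter (s, xs) l')) = l)"
proof (cases xs rule: rev_exhaust)
  case Nil then show ?thesis by (simp add: app_letter_def Let_def)
next
  case (snoc ys y)
  then show ?thesis using assms
    by (cases ys) (auto simp: app_letter_def Let_def)
qed

lemma main_fps:
  "chain t ws \<Longrightarrow> RR_fps N p (t, []) (t, ws) = prod_list (map (\<lambda>(a, b, k). Rgen_fps N p a b k) ws)"
proof (induction ws arbitrary: t)
  case Nil
  show ?case by (rule fps_ext) (simp add: RR_fps_def hit_zz)
next
  case (Cons l rest)
  obtain a b k where l: "l = (a, b, k)" by (cases l) auto
  have c: "a = t" "a \<noteq> b" "chain b rest" using Cons.prems l by auto
  have R1: "Rgen_fps N p a b k = RR_fps N p (t, []) (t, [l])" by (simp add: Rgen_fps_def gmult_def l c)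
  show ?case
  proof (cases "rest = []")
    case True then show ?thesis using R1 l by simp
  next
    case False
    define U where "U = {x::arrow. fst x = t \<and> \<not> (2 \<le> length (snd x) \<and> hd (snd x) = l)}"
    have cl: "move x m \<in> U" if "x \<in> U" "x \<noteq> (t, [l])" for x m
    proof -
      obtain s xs where x: "x = (s, xs)" by (cases x) auto
      show ?thesis using that app_U[of xs l s] unfolding U_def x move_def by auto
    qed
    have s1: "RR_fps N p (t, []) (t, l # rest) = RR_fps N p (t, []) (t, [l]) * RR_fps N p (t, [l]) (t, l # rest)"
      by (rule RR_fps_cut[of _ U]) (use cl False in \<open>auto simp: U_def Suc_le_eq\<close>)
    have g1: "gmult (t, [l]) (b, []) = (t, [l])" by (simp add: gmult_def)
    have g2: "gmult (t, [l]) (b, rest) = (t, l # rest)"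
      using foldl_chain[of t "[l]" rest] Cons.prems by (simp add: gmult_def)
    have "RR_fps N p (t, [l]) (t, l # rest) = RR_fps N p (b, []) (b, rest)"
      using RR_fps_transl[of "(t, [l])" "(b, [])" "(b, rest)" N p] g1 g2 c l Cons.prems
      by (simp add: wf_def)
    then show ?thesis using s1 R1 Cons.IH[OF c(3)] l by simp
  qed
qed

lemma red_chain:
  "reduced_word N i ls \<Longrightarrow> chain i ls \<and> (\<forall>l\<in>set ls. fst l \<in> {1..N} \<and> fst (snd l) \<in> {1..N})"
proof (induction ls arbitrary: i)
  case Nil then show ?case by simp
next
  case (Cons l R)
  have A: "\<forall>j<length (l # R). fst ((l#R)!j) \<in> {1..N} \<and> fst (snd ((l#R)!j)) \<in> {1..N}
        \<and> fst ((l#R)!j) \<noteq> fst (snd ((l#R)!j)) \<and> snd (snd ((l#R)!j)) \<in> {-1, 1}"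
    and B: "fst l = i"
    and C: "\<forall>j. Suc j < length (l#R) \<longrightarrow> fst (snd ((l#R)!j)) = fst ((l#R)!Suc j)
        \<and> snd (snd ((l#R)!Suc j)) = - snd (snd ((l#R)!j))"
    using Cons.prems unfolding reduced_word_def by auto
  have A0: "fst l \<in> {1..N} \<and> fst (snd l) \<in> {1..N} \<and> fst l \<noteq> fst (snd l) \<and> snd (snd l) \<in> {-1, 1}"
    using A[rule_format, of 0] by simp
  have r1: "\<forall>j<length R. fst (R!j) \<in> {1..N} \<and> fst (snd (R!j)) \<in> {1..N}
        \<and> fst (R!j) \<noteq> fst (snd (R!j)) \<and> snd (snd (R!j)) \<in> {-1, 1}"
  proof (intro allI impI)
    fix j assume "j < length R"
    then show "fst (R!j) \<in> {1..N} \<and> fst (snd (R!j)) \<in> {1..N}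
        \<and> fst (R!j) \<noteq> fst (snd (R!j)) \<and> snd (snd (R!j)) \<in> {-1, 1}"
      using A[rule_format, of "Suc j"] by simp
  qed
  have r2: "R \<noteq> [] \<longrightarrow> fst (R!0) = fst (snd l)" using C[rule_format, of 0] by simp
  have r3: "\<forall>j. Suc j < length R \<longrightarrow> fst (snd (R!j)) = fst (R!Suc j) \<and> snd (snd (R!Suc j)) = - snd (snd (R!j))"
  proof (intro allI impI)
    fix j assume "Suc j < length R"
    then show "fst (snd (R!j)) = fst (R!Suc j) \<and> snd (snd (R!Suc j)) = - snd (snd (R!j))"
      using C[rule_format, of "Suc j"] by simp
  qed
  have red: "reduced_word N (fst (snd l)) R"
    unfolding reduced_word_def using r1 r2 r3 by blast
  have hd: "R \<noteq> [] \<Longrightarrow> snd (snd (hd R)) \<noteq> snd (snd l)"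
  proof -
    assume "R \<noteq> []"
    then have "snd (snd (R!0)) = - snd (snd l)" using C[rule_format, of 0] by simp
    then show ?thesis using A0 \<open>R \<noteq> []\<close> by (auto simp: hd_conv_nth)
  qed
  show ?case using Cons.IH[OF red] A0 B hd by auto
qed




definition inr :: "nat \<Rightarrow> arrow \<Rightarrow> bool" where
  "inr N x \<longleftrightarrow> fst x \<in> {1..N} \<and> (\<forall>l\<in>set (snd x). fst l \<in> {1..N} \<and> fst (snd l) \<in> {1..N})"

lemma tgt_inr: "inr N x \<Longrightarrow> tgt x \<in> {1..N}"
  by (cases "snd x = []") (auto simp: inr_def tgt_def)

lemma app_inr: "inr N x \<Longrightarrow> fst l \<in> {1..N} \<Longrightarrow> fst (snd l) \<in> {1..N} \<Longrightarrow> inr N (app_letter x l)"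
  unfolding inr_def app_letter_def Let_def
  by (auto dest: in_set_butlastD)

lemma foldl_inr: "inr N x \<Longrightarrow> \<forall>l\<in>set ls. fst l \<in> {1..N} \<and> fst (snd l) \<in> {1..N} \<Longrightarrow> inr N (foldl app_letter x ls)"
  by (induction ls arbitrary: x) (auto simp: app_inr)

lemma ginv_inr: "inr N x \<Longrightarrow> inr N (ginv x)"
  using tgt_inr[of N x] by (auto simp: inr_def ginv_sw sw_def split: prod.splits)

lemma move_inr: "inr N x \<Longrightarrow> m \<in> MM N \<Longrightarrow> inr N (move x m)"
  unfolding move_def using tgt_inr[of N x] by (intro app_inr) (auto simp: MM_def)

lemma q_nonneg: "valid_probs N p \<Longrightarrow> inr N x \<Longrightarrow> m \<in> MM N \<Longrightarrow> 0 \<le> q p x m"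
  using tgt_inr[of N x] unfolding valid_probs_def q_def MM_def
  by (cases m) (auto intro: less_imp_le)

lemma q_sum: "valid_probs N p \<Longrightarrow> inr N x \<Longrightarrow> (\<Sum>m\<in>MM N. q p x m) = 1"
proof -
  assume v: "valid_probs N p" and x: "inr N x"
  define t where "t = tgt x"
  have t: "t \<in> {1..N}" using tgt_inr[OF x] t_def by simp
  have "(\<Sum>m\<in>MM N. q p x m) = (\<Sum>j\<in>{1..N}. \<Sum>k\<in>{-1::int, 1}. q p x (j, k))"
    unfolding MM_def by (subst sum.cartesian_product) (simp add: case_prod_beta)
  also have "\<dots> = (\<Sum>j\<in>{1..N}. if j \<noteq> t then (\<Sum>k\<in>{-1::int, 1}. p t j k) else 0)"
    by (rule sum.cong) (auto simp: q_def t_def)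
  also have "\<dots> = (\<Sum>j\<in>{1..N} - {t}. \<Sum>k\<in>{-1::int, 1}. p t j k)"
    by (simp add: sum.If_cases Diff_eq Compl_eq)
  also have "\<dots> = 1" using v t unfolding valid_probs_def by blast
  finally show ?thesis .
qed

lemma hit_nonneg: "valid_probs N p \<Longrightarrow> inr N x \<Longrightarrow> 0 \<le> hitprob N p x y n"
proof (induction n arbitrary: x)
  case 0 then show ?case by (simp add: hit0)
next
  case (Suc n)
  have "0 \<le> q p x m * hitprob N p (move x m) y n" if m: "m \<in> MM N" for m
    using q_nonneg[OF Suc.prems m] Suc.IH[OF Suc.prems(1) move_inr[OF Suc.prems(2) m]] by simp
  then show ?case unfolding hitSuc by (auto intro!: sum_nonneg)
qed

lemma hit_bound: "valid_probs N p \<Longrightarrow> inr N x \<Longrightarrow> (\<Sum>n<K. hitprob N p x y n) \<le> 1"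
proof (induction K arbitrary: x)
  case 0 then show ?case by simp
next
  case (Suc K)
  show ?case
  proof (cases "x = y")
    case True
    then show ?thesis by (simp add: sum.lessThan_Suc_shift hit0 hitSuc del: sum.lessThan_Suc)
  next
    case False
    have "(\<Sum>n<Suc K. hitprob N p x y n) = (\<Sum>n<K. \<Sum>m\<in>MM N. q p x m * hitprob N p (move x m) y n)"
      using False by (simp add: sum.lessThan_Suc_shift hit0 hitSuc del: sum.lessThan_Suc)
    also have "\<dots> = (\<Sum>m\<in>MM N. q p x m * (\<Sum>n<K. hitprob N p (move x m) y n))"
      by (simp add: sum_distrib_left sum.swap[of _ "{..<K}"])
    also have "\<dots> \<le> (\<Sum>m\<in>MM N. q p x m * 1)"
      by (rule sum_mono, rule mult_left_mono) (use Suc q_nonneg move_inr in auto)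
    also have "\<dots> = 1" using q_sum Suc.prems by simp
    finally show ?thesis .
  qed
qed

definition AS :: "real fps \<Rightarrow> bool" where
  "AS F \<longleftrightarrow> (\<forall>n. 0 \<le> fps_nth F n) \<and> summable (\<lambda>n. fps_nth F n)"

definition ev :: "real fps \<Rightarrow> complex \<Rightarrow> complex" where
  "ev F z = (\<Sum>n. complex_of_real (fps_nth F n) * z ^ n)"

lemma RR_AS: "valid_probs N p \<Longrightarrow> inr N x \<Longrightarrow> AS (RR_fps N p x y)"
proof -
  assume v: "valid_probs N p" and x: "inr N x"
  have "summable (hitprob N p x y)"
    by (rule summableI_nonneg_bounded[where x=1]) (use hit_nonneg[OF v x] hit_bound[OF v x] in auto)
  moreover have "fps_nth (Abs_fps (hitprob N p x y)) = hitprob N p x y" by (rule ext) simp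
  ultimately show ?thesis unfolding AS_def RR_fps_def using hit_nonneg[OF v x] by simp
qed

lemma AS_norm: "AS F \<Longrightarrow> norm z \<le> 1 \<Longrightarrow> summable (\<lambda>n. norm (complex_of_real (fps_nth F n) * z ^ n))"
proof -
  assume F: "AS F" and z: "norm z \<le> 1"
  show ?thesis
  proof (rule summable_comparison_test'[where g = "\<lambda>n. fps_nth F n" and N = 0])
    show "summable (\<lambda>n. fps_nth F n)" using F by (simp add: AS_def)
  next
    fix n :: nat
    have "norm (z ^ n) \<le> 1" using z by (simp add: norm_power power_le_one)
    moreover have "0 \<le> fps_nth F n" using F by (simp add: AS_def)
    ultimately show "norm (norm (complex_of_real (fps_nth F n) * z ^ n)) \<le> fps_nth F n"
      by (simp add: norm_mult mult_left_le)
  qed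
qed

lemma ev_mult:
  assumes F: "AS F" and G: "AS G" and z: "norm z \<le> 1"
  shows "ev (F * G) z = ev F z * ev G z \<and> AS (F * G)"
proof
  have "ev F z * ev G z = (\<Sum>k. \<Sum>i\<le>k. (complex_of_real (fps_nth F i) * z ^ i) * (complex_of_real (fps_nth G (k - i)) * z ^ (k - i)))"
    unfolding ev_def by (rule Cauchy_product) (use AS_norm F G z in auto)
  also have "\<dots> = ev (F * G) z"
  proof -
    have "(\<Sum>i\<le>k. (complex_of_real (fps_nth F i) * z ^ i) * (complex_of_real (fps_nth G (k - i)) * z ^ (k - i)))
        = complex_of_real (fps_nth (F * G) k) * z ^ k" for k
    proof -
      have "(\<Sum>i\<le>k. (complex_of_real (fps_nth F i) * z ^ i) * (complex_of_real (fps_nth G (k - i)) * z ^ (k - i)))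
          = (\<Sum>i\<le>k. complex_of_real (fps_nth F i * fps_nth G (k - i)) * z ^ k)"
      proof (rule sum.cong)
        fix i assume "i \<in> {..k}"
        then have "z ^ i * z ^ (k - i) = z ^ k" by (simp add: power_add[symmetric])
        then show "(complex_of_real (fps_nth F i) * z ^ i) * (complex_of_real (fps_nth G (k - i)) * z ^ (k - i))
            = complex_of_real (fps_nth F i * fps_nth G (k - i)) * z ^ k"
          by (simp add: algebra_simps)
      qed simp
      also have "\<dots> = complex_of_real (fps_nth (F * G) k) * z ^ k"
        by (simp add: fps_mult_nth atLeast0AtMost sum_distrib_right)
      finally show ?thesis .
    qed
    then show ?thesis unfolding ev_def by simp
  qed
  finally show "ev (F * G) z = ev F z * ev G z" by simp
next
  have nF: "summable (\<lambda>k. norm (fps_nth F k))" and nG: "summable (\<lambda>k. norm (fps_nth G k))"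
    using F G by (simp_all add: AS_def)
  have "summable (\<lambda>k. \<Sum>i\<le>k. fps_nth F i * fps_nth G (k - i))"
    by (rule summable_Cauchy_product[OF nF nG])
  moreover have "fps_nth (F * G) = (\<lambda>k. \<Sum>i\<le>k. fps_nth F i * fps_nth G (k - i))"
    by (rule ext) (simp add: fps_mult_nth atLeast0AtMost)
  ultimately show "AS (F * G)"
    using F G unfolding AS_def by (auto intro!: sum_nonneg)
qed

lemma ev_one: "ev 1 z = 1 \<and> AS 1"
proof
  have e: "(\<lambda>n. complex_of_real (fps_nth (1::real fps) n) * z ^ n) = (\<lambda>n. if n = 0 then 1 else 0)"
    by (auto simp: fun_eq_iff)
  show "ev 1 z = 1" unfolding ev_def e using sums_single[of 0 "\<lambda>_. 1::complex"] sums_unique by fastforce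
  have e2: "(\<lambda>n. fps_nth (1::real fps) n) = (\<lambda>n. if n = 0 then 1 else 0)" by (auto simp: fun_eq_iff)
  show "AS 1" unfolding AS_def e2 using sums_single[of 0 "\<lambda>_. 1::real"] summable_def by fastforce
qed

lemma ev_prod:
  "\<forall>F\<in>set Fs. AS F \<Longrightarrow> norm z \<le> 1 \<Longrightarrow> ev (prod_list Fs) z = prod_list (map (\<lambda>F. ev F z) Fs) \<and> AS (prod_list Fs)"
proof (induction Fs)
  case Nil then show ?case using ev_one by simp
next
  case (Cons F Fs)
  then show ?case using ev_mult[of F "prod_list Fs" z] by simp
qed




theorem lemma6p2:
  fixes N :: nat and p :: "nat \<Rightarrow> nat \<Rightarrow> int \<Rightarrow> real"
    and i :: nat and w1 w2 :: arrow and ws :: "letter list"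
  assumes "N \<ge> 3"
    and "valid_probs N p"
    and "i \<in> {1..N}"
    and "w1 \<in> arrows_from N i" and "w2 \<in> arrows_from N i" and "w1 \<noteq> w2"
    and "ws = snd (gmult (ginv w1) w2)"
  shows "RR_fps N p w1 w2 = prod_list (map (\<lambda>(a, b, k). Rgen_fps N p a b k) ws)
         \<and> (\<forall>z::complex. norm z \<le> 1 \<longrightarrow>
              RR N p w1 w2 z = prod_list (map (\<lambda>(a, b, k). Rgen N p a b k z) ws))"
proof -
  obtain ls1 where w1: "w1 = (i, ls1)" "reduced_word N i ls1" using assms(4) by (auto simp: arrows_from_def)
  obtain ls2 where w2: "w2 = (i, ls2)" "reduced_word N i ls2" using assms(5) by (auto simp: arrows_from_def)
  have wf1: "wf w1" and in1: "inr N w1" using red_chain[OF w1(2)] w1(1) assms(3) by (auto simp: wf_def inr_def)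
  have wf2: "wf w2" and in2: "inr N w2" using red_chain[OF w2(2)] w2(1) assms(3) by (auto simp: wf_def inr_def)
  have f12: "fst w1 = fst w2" using w1 w2 by simp
  define v where "v = gmult (ginv w1) w2"
  have gi: "wf (ginv w1)" "tgt (ginv w1) = fst w1" "fst (ginv w1) = tgt w1" using ginv_wf[OF wf1] by auto
  have v: "wf v" "fst v = tgt w1" using gmult_wf[of "ginv w1" w2] gi wf2 f12 unfolding v_def by auto
  have vw: "v = (tgt w1, ws)" using v(2) assms(7) unfolding v_def[symmetric] by (metis prod.collapse)
  have e2: "gmult w1 v = w2"
  proof -
    have "gmult w1 v = gmult (gmult w1 (ginv w1)) w2"
      unfolding v_def by (rule gmult_assoc) (use wf1 wf2 gi f12 in auto)
    also have "\<dots> = w2" using gmult_ginv[OF wf1] f12 gmult_unit[OF wf2] by simp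
    finally show ?thesis .
  qed
  have e1: "gmult w1 (tgt w1, []) = w1" by (simp add: gmult_def)
  have T: "RR_fps N p w1 w2 = RR_fps N p (tgt w1, []) (tgt w1, ws)"
    using RR_fps_transl[of w1 "(tgt w1, [])" v N p] wf1 v e1 e2 vw by (simp add: wf_def)
  have ch: "chain (tgt w1) ws" using v(1) vw by (simp add: wf_def)
  have P1: "RR_fps N p w1 w2 = prod_list (map (\<lambda>(a, b, k). Rgen_fps N p a b k) ws)"
    using T main_fps[OF ch] by simp
  have inv: "inr N v"
    unfolding v_def gmult_def using ginv_inr[OF in1] in2 by (intro foldl_inr) (auto simp: inr_def)
  have lr: "\<forall>l\<in>set ws. fst l \<in> {1..N}" using inv vw by (auto simp: inr_def)
  have AS_all: "\<forall>F\<in>set (map (\<lambda>(a, b, k). Rgen_fps N p a b k) ws). AS F"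
  proof
    fix F assume "F \<in> set (map (\<lambda>(a, b, k). Rgen_fps N p a b k) ws)"
    then obtain a b k where "(a, b, k) \<in> set ws" "F = Rgen_fps N p a b k" by auto
    moreover have "inr N (a, [])" using lr calculation(1) by (force simp: inr_def)
    ultimately show "AS F" unfolding Rgen_fps_def using RR_AS[OF assms(2)] by simp
  qed
  have RRev: "RR N p x y z = ev (RR_fps N p x y) z" for x y z
    by (simp add: RR_def ev_def RR_fps_def)
  have P2: "RR N p w1 w2 z = prod_list (map (\<lambda>(a, b, k). Rgen N p a b k z) ws)" if z: "norm z \<le> 1" for z
  proof -
    have "RR N p w1 w2 z = ev (prod_list (map (\<lambda>(a, b, k). Rgen_fps N p a b k) ws)) z"
      using RRev P1 by simp
    also have "\<dots> = prod_list (map (\<lambda>F. ev F z) (map (\<lambda>(a, b, k). Rgen_fps N p a b k) ws))"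
      using ev_prod[OF AS_all z] by simp
    also have "\<dots> = prod_list (map (\<lambda>(a, b, k). Rgen N p a b k z) ws)"
    proof -
      have "(\<lambda>F. ev F z) \<circ> (\<lambda>(a, b, k). Rgen_fps N p a b k) = (\<lambda>(a, b, k). Rgen N p a b k z)"
        by (auto simp: fun_eq_iff Rgen_def Rgen_fps_def RRev)
      then show ?thesis by (simp only: map_map)
    qed
    finally show ?thesis .
  qed
  show ?thesis using P1 P2 by blast
qed


end
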